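(* Let $p\ge1$ and $\Gamma=\{(s,|s|^p):s\in\mathbb{R}\}$. There exists a set $E\subset[-\pi/2,\pi/2)^2$ of positive Lebesgue measure such that for every $(\theta_1,\theta_2)\in E$, $(\Gamma,\ell_{\theta_1}\cup\ell_{\theta_2})$ is a Heisenberg Uniqueness Pair.
   Context: For a finite complex Borel measure $\mu$ on $\mathbb{R}^2$, $\widehat{\mu}(x,y)=\int_{\mathbb{R}^2}e^{-i(xs+yt)}\,d\mu(s,t)$. For an angle $\theta$, $\ell_\theta=\{t(\cos\theta,\sin\theta):t\in\mathbb{R}\}$. $\mathcal{AC}(\Gamma)$ is the set of finite complex measures supported on $\Gamma$ and absolutely continuous with respect to arc length on $\Gamma$. For $\Lambda\subset\mathbb{R}^2$, $(\Gamma,\Lambda)$ is a Heisenberg Uniqueness Pair if every $\mu\in\mathcal{AC}(\Gamma)$ with $\widehat{\mu}=0$ on $\Lambda$ satisfies $\mu=0$. *)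

theory Defs
  imports "HOL-Analysis.Analysis"
begin

definition Gamma :: "real \<Rightarrow> (real \<times> real) set" where
  "Gamma p = {(s, \<bar>s\<bar> powr p) | s. True}"

text \<open>Arc-length measure on Gamma_p, as a measure on the plane: the push-forward of
  sqrt(1 + phi'(s)^2) ds under s \<mapsto> (s, |s|^p), where phi(s) = |s|^p and
  phi'(s)^2 = p^2 |s|^(2(p-1)) (for s \<noteq> 0; the value at s = 0 is irrelevant).\<close>
definition arclen :: "real \<Rightarrow> (real \<times> real) measure" where
  "arclen p = distr (density lborel (\<lambda>s. ennreal (sqrt (1 + p\<^sup>2 * \<bar>s\<bar> powr (2 * (p - 1))))))
                    borel (\<lambda>s. (s, \<bar>s\<bar> powr p))"

text \<open>A measure mu in AC(Gamma) is d mu = f d(arclen), f integrable w.r.t. arc length.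
  Its Fourier transform: mu^(x,y) = integral of e^{-i(xs+yt)} d mu(s,t).\<close>
definition ft :: "real \<Rightarrow> (real \<times> real \<Rightarrow> complex) \<Rightarrow> real \<times> real \<Rightarrow> complex" where
  "ft p f = (\<lambda>(x, y). LINT z | arclen p. f z * cis (- (x * fst z + y * snd z)))"

definition line :: "real \<Rightarrow> (real \<times> real) set" where
  "line \<theta> = {(t * cos \<theta>, t * sin \<theta>) | t. True}"

definition HUP :: "real \<Rightarrow> (real \<times> real) set \<Rightarrow> bool" where
  "HUP p \<Lambda> \<longleftrightarrow> (\<forall>f :: real \<times> real \<Rightarrow> complex.
      integrable (arclen p) f \<and> (\<forall>w\<in>\<Lambda>. ft p f w = 0) \<longrightarrow> (AE z in arclen p. f z = 0))"

end

theory Submission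
  imports Defs "HOL-Probability.Levy"
begin


lemma int_ind:
  fixes F h :: "real \<Rightarrow> real"
  assumes "integrable lborel F" "h \<in> borel_measurable borel" "B \<in> sets borel"
  shows "integrable lborel (\<lambda>x. indicator B (h x) * F x)"
  using assms by (intro Bochner_Integration.integrable_bound[OF assms(1)]) (auto simp: indicator_def measurable_sets_borel)

lemma fourier_real_pos:
  fixes G h :: "real \<Rightarrow> real"
  assumes G: "integrable lborel G" and h[measurable]: "h \<in> borel_measurable borel"
    and Z: "\<And>t. (LINT s|lborel. complex_of_real (G s) * cis (t * h s)) = 0"
    and A[measurable]: "A \<in> sets borel"
  shows "(LINT s|lborel. indicator A (h s) * G s) = 0"
proof -
  have Gm[measurable]: "G \<in> borel_measurable borel"
    using borel_measurable_integrable[OF G] by simp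
  define Gp where "Gp = (\<lambda>s. max (G s) 0)"
  define Gn where "Gn = (\<lambda>s. max (- G s) 0)"
  have [measurable]: "Gp \<in> borel_measurable borel" "Gn \<in> borel_measurable borel"
    unfolding Gp_def Gn_def by measurable
  have iGp: "integrable lborel Gp" and iGn: "integrable lborel Gn"
    unfolding Gp_def Gn_def using G by auto
  have GpGn: "G s = Gp s - Gn s" for s unfolding Gp_def Gn_def by auto
  have Gp0: "Gp s \<ge> 0" "Gn s \<ge> 0" for s unfolding Gp_def Gn_def by auto
  have "(LINT s|lborel. complex_of_real (G s) * cis (0 * h s)) = 0" by (rule Z)
  then have "(LINT s|lborel. G s) = 0" by simp
  then have aeq: "(LINT s|lborel. Gp s) = (LINT s|lborel. Gn s)"
    using iGp iGn by (simp add: GpGn)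
  define a where "a = (LINT s|lborel. Gp s)"
  have a0: "a \<ge> 0" unfolding a_def using Gp0 by (simp add: integral_nonneg_AE)
  show ?thesis
  proof (cases "a = 0")
    case True
    have "AE s in lborel. Gp s = 0"
      using integral_nonneg_eq_0_iff_AE[OF iGp] Gp0 True a_def by auto
    moreover have "AE s in lborel. Gn s = 0"
      using integral_nonneg_eq_0_iff_AE[OF iGn] Gp0 True a_def aeq by auto
    ultimately have "AE s in lborel. indicator A (h s) * G s = 0"
      by eventually_elim (simp add: GpGn)
    then show ?thesis by (rule integral_eq_zero_AE)
  next
    case False
    then have apos: "a > 0" using a0 by simp
    define Np where "Np = distr (density lborel (\<lambda>s. ennreal (Gp s / a))) borel h"
    define Nn where "Nn = distr (density lborel (\<lambda>s. ennreal (Gn s / a))) borel h"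
    have iGpa: "integrable lborel (\<lambda>s. Gp s / a)" "integrable lborel (\<lambda>s. Gn s / a)"
      using iGp iGn by auto
    have emN: "emeasure Np B = ennreal ((LINT s|lborel. indicator B (h s) * Gp s) / a)"
      if B[measurable]: "B \<in> sets borel" for B
    proof -
      have "emeasure Np B = (\<integral>\<^sup>+ s. ennreal (Gp s / a) * indicator (h -` B) s \<partial>lborel)"
        unfolding Np_def using B by (simp add: emeasure_distr emeasure_density measurable_sets_borel[OF h B])
      also have "\<dots> = (\<integral>\<^sup>+ s. ennreal (indicator B (h s) * Gp s / a) \<partial>lborel)"
        by (intro nn_integral_cong) (auto simp: indicator_def)
      also have "\<dots> = ennreal (LINT s|lborel. indicator B (h s) * Gp s / a)"
        using Gp0 apos
        by (intro nn_integral_eq_integral) (auto intro!: int_ind iGp)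
      finally show ?thesis by simp
    qed
    have emNn: "emeasure Nn B = ennreal ((LINT s|lborel. indicator B (h s) * Gn s) / a)"
      if B[measurable]: "B \<in> sets borel" for B
    proof -
      have "emeasure Nn B = (\<integral>\<^sup>+ s. ennreal (Gn s / a) * indicator (h -` B) s \<partial>lborel)"
        unfolding Nn_def using B by (simp add: emeasure_distr emeasure_density measurable_sets_borel[OF h B])
      also have "\<dots> = (\<integral>\<^sup>+ s. ennreal (indicator B (h s) * Gn s / a) \<partial>lborel)"
        by (intro nn_integral_cong) (auto simp: indicator_def)
      also have "\<dots> = ennreal (LINT s|lborel. indicator B (h s) * Gn s / a)"
        using Gp0 apos
        by (intro nn_integral_eq_integral) (auto intro!: int_ind iGn)
      finally show ?thesis by simp
    qed
    have rdp: "real_distribution Np"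
    proof -
      have "prob_space Np"
      proof
        have "emeasure Np (space Np) = emeasure Np UNIV" unfolding Np_def by simp
        also have "\<dots> = 1" using emN[of UNIV] apos by (simp add: a_def)
        finally show "emeasure Np (space Np) = 1" .
      qed
      then show ?thesis unfolding real_distribution_def real_distribution_axioms_def Np_def by simp
    qed
    have rdn: "real_distribution Nn"
    proof -
      have "prob_space Nn"
      proof
        have "emeasure Nn (space Nn) = emeasure Nn UNIV" unfolding Nn_def by simp
        also have "\<dots> = 1" using emNn[of UNIV] apos aeq by (simp add: a_def)
        finally show "emeasure Nn (space Nn) = 1" .
      qed
      then show ?thesis unfolding real_distribution_def real_distribution_axioms_def Nn_def by simp
    qed
    have chp: "char Np t = (LINT s|lborel. complex_of_real (Gp s / a) * cis (t * h s))" for t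
    proof -
      have "char Np t = (CLINT s|density lborel (\<lambda>s. ennreal (Gp s / a)). iexp (t * h s))"
        unfolding char_def Np_def by (subst integral_distr) auto
      also have "\<dots> = (CLINT s|lborel. (Gp s / a) *\<^sub>R iexp (t * h s))"
        by (subst integral_density) (auto intro!: AE_I2 divide_nonneg_nonneg simp: Gp0 apos less_imp_le)
      finally show ?thesis by (simp add: scaleR_conv_of_real cis_conv_exp)
    qed
    have chn: "char Nn t = (LINT s|lborel. complex_of_real (Gn s / a) * cis (t * h s))" for t
    proof -
      have "char Nn t = (CLINT s|density lborel (\<lambda>s. ennreal (Gn s / a)). iexp (t * h s))"
        unfolding char_def Nn_def by (subst integral_distr) auto
      also have "\<dots> = (CLINT s|lborel. (Gn s / a) *\<^sub>R iexp (t * h s))"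
        by (subst integral_density) (auto intro!: AE_I2 divide_nonneg_nonneg simp: Gp0 apos less_imp_le)
      finally show ?thesis by (simp add: scaleR_conv_of_real cis_conv_exp)
    qed
    have intc: "integrable lborel (\<lambda>s. complex_of_real (F s) * cis (t * h s))"
      if "integrable lborel F" for F t
    proof -
      have [measurable]: "F \<in> borel_measurable borel" using borel_measurable_integrable[OF that] by simp
      have cm: "cis \<in> borel_measurable borel"
        by (intro borel_measurable_continuous_onI continuous_intros)
      have "(\<lambda>s. t * h s) \<in> borel_measurable borel" by measurable
      then have [measurable]: "(\<lambda>s. cis (t * h s)) \<in> borel_measurable borel"
        using measurable_compose[OF _ cm] by blast
      show ?thesis
        by (rule Bochner_Integration.integrable_bound[OF that]) (measurable, simp add: norm_mult)
    qed
    have "char Np = char Nn"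
    proof
      fix t
      have "char Np t - char Nn t
          = (LINT s|lborel. complex_of_real (Gp s / a) * cis (t * h s) - complex_of_real (Gn s / a) * cis (t * h s))"
        unfolding chp chn using intc[OF iGpa(1)] intc[OF iGpa(2)] by simp
      also have "\<dots> = (LINT s|lborel. complex_of_real (1/a) * (complex_of_real (G s) * cis (t * h s)))"
        using apos by (intro Bochner_Integration.integral_cong) (auto simp: GpGn diff_divide_distrib[symmetric] left_diff_distrib)
      also have "\<dots> = 0" using Z[of t] by simp
      finally show "char Np t = char Nn t" by simp
    qed
    then have "Np = Nn" using Levy_uniqueness rdp rdn by blast
    then have "ennreal ((LINT s|lborel. indicator A (h s) * Gp s) / a)
        = ennreal ((LINT s|lborel. indicator A (h s) * Gn s) / a)"
      using emN[OF A] emNn[OF A] by simp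
    moreover have "(LINT s|lborel. indicator A (h s) * Gp s) \<ge> 0"
      "(LINT s|lborel. indicator A (h s) * Gn s) \<ge> 0"
      using Gp0 by (auto intro!: integral_nonneg_AE)
    ultimately have "(LINT s|lborel. indicator A (h s) * Gp s) = (LINT s|lborel. indicator A (h s) * Gn s)"
      using apos by (simp add: ennreal_inj divide_nonneg_pos)
    moreover have "(LINT s|lborel. indicator A (h s) * G s) =
      (LINT s|lborel. indicator A (h s) * Gp s) - (LINT s|lborel. indicator A (h s) * Gn s)"
      unfolding GpGn right_diff_distrib
      by (intro Bochner_Integration.integral_diff) (auto intro!: int_ind iGp iGn)
    ultimately show ?thesis by simp
  qed
qed



lemma fourier_complex:
  fixes F :: "real \<Rightarrow> complex" and h :: "real \<Rightarrow> real"
  assumes F: "integrable lborel F" and h[measurable]: "h \<in> borel_measurable borel"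
    and Z: "\<And>t. (CLINT s|lborel. F s * cis (t * h s)) = 0"
    and A[measurable]: "A \<in> sets borel"
  shows "(LINT s|lborel. indicator A (h s) * Re (F s)) = 0"
    "(LINT s|lborel. indicator A (h s) * Im (F s)) = 0"
proof -
  have [measurable]: "F \<in> borel_measurable borel" using borel_measurable_integrable[OF F] by simp
  have cm: "cis \<in> borel_measurable borel"
    by (intro borel_measurable_continuous_onI continuous_intros)
  have cmt[measurable]: "(\<lambda>s. cis (t * h s)) \<in> borel_measurable borel" for t
  proof -
    have "(\<lambda>s. t * h s) \<in> borel_measurable borel" by measurable
    then show ?thesis using measurable_compose[OF _ cm] by blast
  qed
  have i1: "integrable lborel (\<lambda>s. F s * cis (t * h s))" for t
    by (rule Bochner_Integration.integrable_bound[OF F]) (measurable, simp add: norm_mult)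
  have cnm: "cnj \<in> borel_measurable borel"
    by (intro borel_measurable_continuous_onI continuous_intros)
  have [measurable]: "(\<lambda>s. cnj (F s)) \<in> borel_measurable borel"
    using measurable_compose[OF _ cnm] \<open>F \<in> borel_measurable borel\<close> by blast
  have i2: "integrable lborel (\<lambda>s. cnj (F s) * cis (t * h s))" for t
    by (rule Bochner_Integration.integrable_bound[OF F]) (measurable, simp add: norm_mult)
  have Zc: "(CLINT s|lborel. cnj (F s) * cis (t * h s)) = 0" for t
  proof -
    have "(CLINT s|lborel. cnj (F s) * cis (t * h s)) = (CLINT s|lborel. cnj (F s * cis ((-t) * h s)))"
      by (simp add: cis_cnj)
    also have "\<dots> = cnj (CLINT s|lborel. F s * cis ((-t) * h s))" by (rule Bochner_Integration.integral_cnj)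
    also have "\<dots> = 0" using Z[of "-t"] by simp
    finally show ?thesis .
  qed
  have "(CLINT s|lborel. complex_of_real (Re (F s)) * cis (t * h s)) = 0" for t
  proof -
    have "(CLINT s|lborel. complex_of_real (Re (F s)) * cis (t * h s))
       = (CLINT s|lborel. (F s * cis (t * h s) + cnj (F s) * cis (t * h s)) / 2)"
    proof (intro Bochner_Integration.integral_cong refl)
      fix x
      have "F x * cis (t * h x) + cnj (F x) * cis (t * h x) = (F x + cnj (F x)) * cis (t * h x)"
        by (simp add: distrib_right)
      also have "\<dots> = complex_of_real (2 * Re (F x)) * cis (t * h x)" by (simp only: complex_add_cnj)
      finally show "complex_of_real (Re (F x)) * cis (t * h x) = (F x * cis (t * h x) + cnj (F x) * cis (t * h x)) / 2"
        by simp
    qed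
    also have "\<dots> = ((CLINT s|lborel. F s * cis (t * h s)) + (CLINT s|lborel. cnj (F s) * cis (t * h s))) / 2"
      using i1 i2 by simp
    also have "\<dots> = 0" using Z Zc by simp
    finally show ?thesis .
  qed
  then show "(LINT s|lborel. indicator A (h s) * Re (F s)) = 0"
    by (intro fourier_real_pos) (auto simp: F)
  have "(CLINT s|lborel. complex_of_real (Im (F s)) * cis (t * h s)) = 0" for t
  proof -
    have "(CLINT s|lborel. complex_of_real (Im (F s)) * cis (t * h s))
       = (CLINT s|lborel. (F s * cis (t * h s) - cnj (F s) * cis (t * h s)) / (2 * \<i>))"
    proof (intro Bochner_Integration.integral_cong refl)
      fix x
      have "F x * cis (t * h x) - cnj (F x) * cis (t * h x) = (F x - cnj (F x)) * cis (t * h x)"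
        by (simp add: left_diff_distrib)
      also have "\<dots> = complex_of_real (2 * Im (F x)) * \<i> * cis (t * h x)" by (simp only: complex_diff_cnj)
      finally show "complex_of_real (Im (F x)) * cis (t * h x) = (F x * cis (t * h x) - cnj (F x) * cis (t * h x)) / (2 * \<i>)"
        by (simp add: algebra_simps)
    qed
    also have "\<dots> = ((CLINT s|lborel. F s * cis (t * h s)) - (CLINT s|lborel. cnj (F s) * cis (t * h s))) / (2 * \<i>)"
      using i1 i2 by simp
    also have "\<dots> = 0" using Z Zc by simp
    finally show ?thesis .
  qed
  then show "(LINT s|lborel. indicator A (h s) * Im (F s)) = 0"
    by (intro fourier_real_pos) (auto simp: F)
qed



lemma borel_measurable_cis[measurable (raw)]:
  "f \<in> borel_measurable M \<Longrightarrow> (\<lambda>x. cis (f x :: real)) \<in> borel_measurable M"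
proof -
  assume "f \<in> borel_measurable M"
  moreover have "cis \<in> borel_measurable borel"
    by (intro borel_measurable_continuous_onI continuous_intros)
  ultimately show ?thesis using measurable_compose by blast
qed

lemma HUP_reduce:
  fixes p :: real and \<Lambda> :: "(real \<times> real) set"
  assumes H: "\<And>F. integrable lborel F \<Longrightarrow>
      (\<And>x y. (x,y) \<in> \<Lambda> \<Longrightarrow> (CLINT s|lborel. F s * cis (-(x * s + y * \<bar>s\<bar> powr p))) = 0)
      \<Longrightarrow> AE s in lborel. F s = 0"
  shows "HUP p \<Lambda>"
  unfolding HUP_def
proof (intro allI impI, elim conjE)
  fix f :: "real \<times> real \<Rightarrow> complex"
  assume fi: "integrable (arclen p) f" and fz: "\<forall>w\<in>\<Lambda>. ft p f w = 0"
  define w where "w = (\<lambda>s::real. sqrt (1 + p\<^sup>2 * \<bar>s\<bar> powr (2 * (p - 1))))"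
  define \<gamma> where "\<gamma> = (\<lambda>s::real. (s, \<bar>s\<bar> powr p))"
  have wm[measurable]: "w \<in> borel_measurable borel" unfolding w_def by measurable
  have gm[measurable]: "\<gamma> \<in> borel \<rightarrow>\<^sub>M borel" unfolding \<gamma>_def by measurable
  have w0: "w s > 0" for s unfolding w_def
    by (intro real_sqrt_gt_zero add_pos_nonneg) auto
  have arc: "arclen p = distr (density lborel (\<lambda>s. ennreal (w s))) borel \<gamma>"
    unfolding arclen_def w_def \<gamma>_def ..
  have fm[measurable]: "f \<in> borel_measurable borel"
    using borel_measurable_integrable[OF fi] unfolding arc by simp
  have gm'[measurable]: "\<gamma> \<in> density lborel (\<lambda>s. ennreal (w s)) \<rightarrow>\<^sub>M borel"
    using gm by simp
  define F where "F = (\<lambda>s. w s *\<^sub>R f (\<gamma> s))"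
  have Fi: "integrable lborel F"
    using fi unfolding arc F_def
    by (subst (asm) integrable_distr_eq[OF gm']) (auto simp: integrable_density w0 less_imp_le)
  have "AE s in lborel. F s = 0"
  proof (rule H[OF Fi])
    fix x y assume xy: "(x, y) \<in> \<Lambda>"
    have [measurable]: "(\<lambda>z::real\<times>real. - (x * fst z + y * snd z)) \<in> borel_measurable borel"
      by (intro borel_measurable_continuous_onI continuous_intros)
    have mz: "(\<lambda>z. f z * cis (- (x * fst z + y * snd z))) \<in> borel_measurable borel"
      by measurable
    have mz2: "(\<lambda>s. f (\<gamma> s) * cis (- (x * fst (\<gamma> s) + y * snd (\<gamma> s)))) \<in> borel_measurable borel"
      using measurable_compose[OF gm mz] by (simp add: o_def)
    have "0 = ft p f (x, y)" using fz xy by auto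
    also have "\<dots> = (CLINT z|arclen p. f z * cis (- (x * fst z + y * snd z)))"
      unfolding ft_def by simp
    also have "\<dots> = (CLINT s|density lborel (\<lambda>s. ennreal (w s)). f (\<gamma> s) * cis (- (x * fst (\<gamma> s) + y * snd (\<gamma> s))))"
      unfolding arc by (rule integral_distr[OF gm' mz])
    also have "\<dots> = (CLINT s|lborel. w s *\<^sub>R (f (\<gamma> s) * cis (- (x * fst (\<gamma> s) + y * snd (\<gamma> s)))))"
      using mz2 by (subst integral_density) (auto simp: w0 less_imp_le)
    also have "\<dots> = (CLINT s|lborel. F s * cis (-(x * s + y * \<bar>s\<bar> powr p)))"
      unfolding F_def \<gamma>_def by simp
    finally show "(CLINT s|lborel. F s * cis (-(x * s + y * \<bar>s\<bar> powr p))) = 0" by simp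
  qed
  then have "AE s in lborel. f (\<gamma> s) = 0"
  proof eventually_elim
    case (elim s)
    then show ?case using w0[of s] by (auto simp: F_def)
  qed
  then have "AE s in density lborel (\<lambda>s. ennreal (w s)). f (\<gamma> s) = 0"
    by (subst AE_density) (auto elim: AE_mp)
  then show "AE z in arclen p. f z = 0"
    unfolding arc by (subst AE_distr_iff) auto
qed



lemma E_props:
  defines "E \<equiv> ({0<..<pi/4} \<times> {-pi/4<..<0} :: (real \<times> real) set)"
  shows "E \<subseteq> {-pi/2..<pi/2} \<times> {-pi/2..<pi/2}" "E \<in> sets lebesgue" "emeasure lebesgue E > 0"
proof -
  show "E \<subseteq> {-pi/2..<pi/2} \<times> {-pi/2..<pi/2}" unfolding E_def using pi_gt_zero by auto
  have Eb: "E \<in> sets borel" unfolding E_def by (intro borel_open open_Times) auto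
  then show "E \<in> sets lebesgue" by simp
  have "emeasure lebesgue E = emeasure lborel E" using Eb by (simp add: emeasure_completion)
  also have "\<dots> = emeasure (lborel \<Otimes>\<^sub>M lborel) E" by (simp add: lborel_prod)
  also have "\<dots> = emeasure lborel {0<..<pi/4::real} * emeasure lborel {-pi/4<..<0::real}"
    unfolding E_def by (intro sigma_finite_measure.emeasure_pair_measure_Times) (auto simp: lborel.sigma_finite_measure_axioms)
  also have "\<dots> = ennreal (pi/4) * ennreal (pi/4)" by simp
  also have "\<dots> > 0" using pi_gt_zero by (simp add: ennreal_mult'' ennreal_zero_less_mult_iff)
  finally show "emeasure lebesgue E > 0" .
qed



definition lam :: "(real \<Rightarrow> real) \<Rightarrow> real set \<Rightarrow> real" where
  "lam G X = (LINT s|lborel. indicator X s * G s)"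

lemma lam_int:
  fixes G :: "real \<Rightarrow> real"
  assumes "integrable lborel G" "X \<in> sets borel"
  shows "integrable lborel (\<lambda>s. indicator X s * G s)"
  using int_ind[of G "\<lambda>x. x" X] assms by simp

lemma lam_union:
  assumes G: "integrable lborel G" and X: "X \<in> sets borel" and Y: "Y \<in> sets borel"
    and d: "X \<inter> Y = {}"
  shows "lam G (X \<union> Y) = lam G X + lam G Y"
proof -
  have "indicator (X \<union> Y) s * G s = indicator X s * G s + indicator Y s * G s" for s
    using d by (auto simp: indicator_def)
  then show ?thesis unfolding lam_def
    using lam_int[OF G X] lam_int[OF G Y] by simp
qed

lemma lam_bound:
  assumes G: "integrable lborel G" and X: "X \<in> sets borel"
  shows "\<bar>lam G X\<bar> \<le> (LINT s|lborel. \<bar>G s\<bar>)"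
proof -
  have "\<bar>lam G X\<bar> \<le> (LINT s|lborel. \<bar>indicator X s * G s\<bar>)"
    unfolding lam_def by (rule integral_abs_bound)
  also have "\<dots> \<le> (LINT s|lborel. \<bar>G s\<bar>)"
    using lam_int[OF G X] G
    by (intro integral_mono) (auto simp: indicator_def)
  finally show ?thesis .
qed

lemma lam_sum:
  assumes G: "integrable lborel G" and X: "\<And>n. X n \<in> sets borel"
    and d: "\<And>m n. m \<noteq> n \<Longrightarrow> X m \<inter> X n = {}"
  shows "lam G (\<Union>n<(N::nat). X n) = (\<Sum>n<N. lam G (X n))"
proof (induction N)
  case 0
  then show ?case by (simp add: lam_def)
next
  case (Suc N)
  have "(\<Union>n<Suc N. X n) = X N \<union> (\<Union>n<N. X n)" by (auto simp: lessThan_Suc)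
  moreover have "X N \<inter> (\<Union>n<N. X n) = {}"
  proof -
    have "X N \<inter> X n = {}" if "n < N" for n using d[of N n] that by auto
    then show ?thesis by blast
  qed
  moreover have "(\<Union>n<N. X n) \<in> sets borel" using X by auto
  ultimately show ?case using Suc lam_union[OF G X[of N]] by (simp add: add.commute)
qed

lemma lam_reflect:
  "lam (\<lambda>s. G (- s)) X = lam G (uminus ` X)"
proof -
  have "lam G (uminus ` X) = (LINT s|lborel. indicator (uminus ` X) (- s) * G (- s))"
    unfolding lam_def by (subst lborel_integral_real_affine[where c="-1" and t=0]) auto
  also have "\<dots> = lam (\<lambda>s. G (- s)) X"
    unfolding lam_def
    by (intro Bochner_Integration.integral_cong) (auto simp: indicator_def image_iff)
  finally show ?thesis by simp
qed

lemma reflect_borel: "X \<in> sets borel \<Longrightarrow> uminus ` X \<in> sets (borel :: real measure)"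
proof -
  assume X: "X \<in> sets borel"
  have "uminus ` X = (uminus :: real \<Rightarrow> real) -` X"
    by (force simp: image_iff)
  moreover have "(uminus :: real \<Rightarrow> real) \<in> borel_measurable borel" by measurable
  ultimately show ?thesis using X measurable_sets_borel by metis
qed

lemma integrable_reflect: "integrable lborel (G :: real \<Rightarrow> real) \<Longrightarrow> integrable lborel (\<lambda>s. G (- s :: real))"
  using lborel_integrable_real_affine_iff[of "-1" G 0] by simp


lemma zero_on:
  assumes G: "integrable lborel G" and S: "S \<in> sets borel"
    and Z: "\<And>B. B \<in> sets borel \<Longrightarrow> B \<subseteq> S \<Longrightarrow> lam G B = 0"
  shows "AE s in lborel. s \<in> S \<longrightarrow> G s = 0"
proof -
  have Gm[measurable]: "G \<in> borel_measurable borel" using borel_measurable_integrable[OF G] by simp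
  have [measurable]: "S \<in> sets borel" by (rule S)
  define P where "P = S \<inter> G -` {0<..}"
  define N where "N = S \<inter> G -` {..<0}"
  have PB: "P \<in> sets borel" and NB: "N \<in> sets borel" unfolding P_def N_def
    using measurable_sets_borel[OF Gm] S by auto
  have P0: "lam G P = 0" using Z[of P] by (auto simp: P_def)
  have Pn: "0 \<le> indicator P s * G s" for s by (simp add: P_def indicator_def)
  have "AE s in lborel. indicator P s * G s = 0"
    using integral_nonneg_eq_0_iff_AE[OF lam_int[OF G PB] AE_I2[OF Pn]] P0
    unfolding lam_def by simp
  moreover have N0: "lam G N = 0" using Z[of N] by (auto simp: N_def)
  have Nn: "0 \<le> - (indicator N s * G s)" for s by (simp add: N_def indicator_def)
  have intN: "integrable lborel (\<lambda>s. - (indicator N s * G s))" using lam_int[OF G NB] by simp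
  then have "AE s in lborel. - (indicator N s * G s) = 0"
    using integral_nonneg_eq_0_iff_AE[OF intN AE_I2[OF Nn]] N0
    unfolding lam_def by simp
  ultimately show ?thesis
  proof eventually_elim
    case (elim s)
    then show ?case by (cases "G s > 0"; cases "G s < 0") (auto simp: P_def N_def indicator_def)
  qed
qed






lemma orbit:
  fixes G \<Phi> :: "real \<Rightarrow> real"
  assumes G: "integrable lborel G"
    and pos: "\<And>s. 0 < s \<Longrightarrow> s < \<Phi> s"
    and mono: "\<And>s t. 0 < s \<Longrightarrow> s < t \<Longrightarrow> \<Phi> s < \<Phi> t"
    and inv: "\<And>B. B \<in> sets borel \<Longrightarrow> B \<subseteq> {0<..} \<Longrightarrow> \<Phi> ` B \<in> sets borel \<and> lam G (\<Phi> ` B) = lam G B"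
    and zo: "\<And>S. S \<in> sets borel \<Longrightarrow> (\<And>B. B \<in> sets borel \<Longrightarrow> B \<subseteq> S \<Longrightarrow> lam G B = 0) \<Longrightarrow> AE s in lborel. s \<in> S \<longrightarrow> G s = 0"
    and cov: "\<And>s. 0 < s \<Longrightarrow> \<exists>a. 0 < a \<and> a < s \<and> s < \<Phi> a"
  shows "AE s in lborel. 0 < s \<longrightarrow> G s = 0"
proof -
  have key: "lam G B = 0" if a: "0 < a" and B: "B \<in> sets borel" "B \<subseteq> {a..<\<Phi> a}" for a B
  proof -
    define X where "X n = (\<Phi> ^^ n) ` B" for n
    define c where "c n = (\<Phi> ^^ n) a" for n
    have cS: "c (Suc n) = \<Phi> (c n)" for n unfolding c_def by simp
    have cpos: "c n > 0" for n
    proof (induction n)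
      case 0 then show ?case using a by (simp add: c_def)
    next
      case (Suc n) then show ?case using pos[of "c n"] by (simp add: cS)
    qed
    have sm: "strict_mono c"
      by (rule strict_monoI_Suc) (use pos cpos cS in auto)
    have XS: "X (Suc n) = \<Phi> ` X n" for n unfolding X_def by (simp add: image_comp)
    have XP: "X n \<subseteq> {c n..<c (Suc n)} \<and> X n \<in> sets borel \<and> lam G (X n) = lam G B" for n
    proof (induction n)
      case 0 then show ?case using B by (simp add: X_def c_def)
    next
      case (Suc n)
      then have sub: "X n \<subseteq> {c n..<c (Suc n)}" and Xb: "X n \<in> sets borel"
        and Xl: "lam G (X n) = lam G B" by auto
      have Xp: "X n \<subseteq> {0<..}" using sub cpos[of n] by force
      have "X (Suc n) \<subseteq> {c (Suc n)..<c (Suc (Suc n))}"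
      proof
        fix y assume "y \<in> X (Suc n)"
        then obtain s where s: "s \<in> X n" "y = \<Phi> s" unfolding XS by auto
        have "c n \<le> s" "s < c (Suc n)" using s sub by auto
        then have "\<Phi> (c n) \<le> \<Phi> s" using mono[of "c n" s] cpos[of n] by (cases "c n = s") auto
        moreover have "\<Phi> s < \<Phi> (c (Suc n))"
          using mono[of s "c (Suc n)"] \<open>c n \<le> s\<close> cpos[of n] \<open>s < c (Suc n)\<close> by simp
        ultimately show "y \<in> {c (Suc n)..<c (Suc (Suc n))}" using s by (simp add: cS)
      qed
      then show ?case using inv[OF Xb Xp] Xl by (simp add: XS)
    qed
    have disj: "X m \<inter> X n = {}" if "m \<noteq> n" for m n
    proof -
      have lt: "X m \<inter> X n = {}" if "m < n" for m n
      proof -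
        have "c (Suc m) \<le> c n" using sm that by (simp add: strict_mono_less_eq Suc_leI)
        then show ?thesis using XP[of m] XP[of n] by fastforce
      qed
      show ?thesis
      proof (cases "m < n")
        case True then show ?thesis using lt by blast
      next
        case False then have "n < m" using \<open>m \<noteq> n\<close> by simp
        then show ?thesis using lt[of n m] by blast
      qed
    qed
    define K where "K = (LINT s|lborel. \<bar>G s\<bar>)"
    have bnd: "real N * \<bar>lam G B\<bar> \<le> K" for N
    proof -
      have "lam G (\<Union>n<N. X n) = (\<Sum>n<N. lam G (X n))"
        by (rule lam_sum[OF G]) (use XP disj in auto)
      also have "\<dots> = real N * lam G B" using XP by simp
      finally have "\<bar>real N * lam G B\<bar> \<le> K"
        using lam_bound[OF G, of "\<Union>n<N. X n"] XP unfolding K_def by auto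
      then show ?thesis by (simp add: abs_mult)
    qed
    show "lam G B = 0"
    proof (rule ccontr)
      assume "lam G B \<noteq> 0"
      then have l: "\<bar>lam G B\<bar> > 0" by simp
      obtain N where "K / \<bar>lam G B\<bar> < real N" using reals_Archimedean2 by blast
      then have "K < real N * \<bar>lam G B\<bar>" using l by (simp add: field_simps)
      then show False using bnd[of N] by simp
    qed
  qed
  have ae: "AE s in lborel. s \<in> {a..<\<Phi> a} \<longrightarrow> G s = 0" if "0 < a" for a
    by (rule zo) (auto intro: key[OF that])
  have "AE s in lborel. \<forall>a \<in> \<rat> \<inter> {0<..}. s \<in> {a..<\<Phi> a} \<longrightarrow> G s = 0"
  proof (subst AE_ball_countable)
    show "countable (\<rat> \<inter> {0<..})" using countable_rat by auto
    show "\<forall>a\<in>\<rat> \<inter> {0<..}. AE s in lborel. s \<in> {a..<\<Phi> a} \<longrightarrow> G s = 0"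
      using ae by blast
  qed
  then show ?thesis
  proof eventually_elim
    case (elim s)
    show ?case
    proof
      assume s0: "0 < s"
      obtain a where a: "0 < a" "a < s" "s < \<Phi> a" using cov[OF s0] by blast
      obtain r where r: "r \<in> \<rat>" "a < r" "r < s" using Rats_dense_in_real[OF a(2)] by blast
      have "\<Phi> a < \<Phi> r" using mono[OF a(1) r(2)] .
      then have "s \<in> {r..<\<Phi> r}" using a r by auto
      then show "G s = 0" using elim r a by auto
    qed
  qed
qed



definition Af :: "real \<Rightarrow> real \<Rightarrow> real \<Rightarrow> real \<Rightarrow> real" where
  "Af p c \<sigma> u = (THE x. 0 < x \<and> c * x + \<sigma> * x powr p = u)"

definition Bf :: "real \<Rightarrow> real \<Rightarrow> real \<Rightarrow> real \<Rightarrow> real" where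
  "Bf p c \<sigma> u = (THE x. 0 < x \<and> \<sigma> * x powr p - c * x = u)"

lemma pw:
  fixes x p :: real
  shows "0 < x \<Longrightarrow> x powr p = x * x powr (p - 1)"
proof -
  assume x: "0 < x"
  have "x powr p = x powr (1 + (p - 1))" by simp
  also have "\<dots> = x powr 1 * x powr (p - 1)" using x by (simp only: powr_add)
  finally show ?thesis using x by simp
qed

lemma g_mono:
  fixes p c \<sigma> x y :: real
  assumes p: "p > 1" and s: "\<sigma> > 0" and xy: "0 < x" "x < y" and cx: "c \<le> \<sigma> * x powr (p - 1)"
  shows "\<sigma> * x powr p - c * x < \<sigma> * y powr p - c * y"
proof -
  have q: "x powr (p - 1) < y powr (p - 1)" using p xy by (intro powr_less_mono2) auto
  have 1: "\<sigma> * (y * x powr (p - 1)) < \<sigma> * (y * y powr (p - 1))"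
    using q xy s by (intro mult_strict_left_mono) auto
  have 2: "c * (y - x) \<le> \<sigma> * x powr (p - 1) * (y - x)"
    using cx xy by (intro mult_right_mono) auto
  show ?thesis using 1 2 pw[OF xy(1), of p] pw[of y p] xy by (simp add: algebra_simps)
qed

lemma g_pos_imp:
  fixes p c \<sigma> x :: real
  assumes x: "0 < x" and g: "\<sigma> * x powr p - c * x \<ge> 0"
  shows "c \<le> \<sigma> * x powr (p - 1)"
proof -
  have "c * x \<le> (\<sigma> * x powr (p - 1)) * x" using g pw[OF x, of p] by (simp add: algebra_simps)
  then show ?thesis using x by simp
qed

lemma root_props:
  fixes p c \<sigma> :: real
  assumes p: "p > 1" and c: "c > 0" and s: "\<sigma> > 0"
  defines "x0 \<equiv> (c / \<sigma>) powr (1 / (p - 1))"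
  shows "x0 > 0" "x0 powr (p - 1) = c / \<sigma>"
    "\<And>z. 0 < z \<Longrightarrow> (\<sigma> * z powr p - c * z > 0 \<longleftrightarrow> x0 < z)"
proof -
  show x0: "x0 > 0" unfolding x0_def using c s by simp
  show x0q: "x0 powr (p - 1) = c / \<sigma>" unfolding x0_def using p c s by (simp add: powr_powr)
  fix z :: real assume z: "0 < z"
  have "\<sigma> * z powr p - c * z > 0 \<longleftrightarrow> z * (\<sigma> * z powr (p - 1) - c) > 0"
    using pw[OF z, of p] by (simp add: algebra_simps)
  also have "\<dots> \<longleftrightarrow> c / \<sigma> < z powr (p - 1)" using z s by (simp add: zero_less_mult_iff field_simps)
  also have "\<dots> \<longleftrightarrow> x0 < z"
  proof
    assume "c / \<sigma> < z powr (p - 1)"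
    then have "x0 powr (p - 1) < z powr (p - 1)" using x0q by simp
    then show "x0 < z" using p x0 z by (metis not_less powr_mono2 less_imp_le diff_ge_0_iff_ge order.strict_implies_order)
  next
    assume "x0 < z"
    then have "x0 powr (p - 1) < z powr (p - 1)" using p x0 by (intro powr_less_mono2) auto
    then show "c / \<sigma> < z powr (p - 1)" using x0q by simp
  qed
  finally show "(\<sigma> * z powr p - c * z > 0 \<longleftrightarrow> x0 < z)" .
qed



context
  fixes p c \<sigma> :: real
  assumes p: "p > 1" and c: "c > 0" and s: "\<sigma> > 0"
begin

lemma g_unique:
  assumes "0 < x" "0 < y" "\<sigma> * x powr p - c * x = u" "\<sigma> * y powr p - c * y = u" "u > 0"
  shows "x = y"
proof (rule ccontr)
  assume "x \<noteq> y"
  then consider "x < y" | "y < x" by linarith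
  then show False
  proof cases
    case 1
    have cx: "c \<le> \<sigma> * x powr (p - 1)" using g_pos_imp[of x \<sigma> p c] assms by simp
    show False using g_mono[OF p s assms(1) 1 cx] assms by simp
  next
    case 2
    have cy: "c \<le> \<sigma> * y powr (p - 1)" using g_pos_imp[of y \<sigma> p c] assms by simp
    show False using g_mono[OF p s assms(2) 2 cy] assms by simp
  qed
qed

lemma g_exists:
  assumes u: "u > 0"
  shows "\<exists>x>0. \<sigma> * x powr p - c * x = u"
proof -
  define x0 where "x0 = (c / \<sigma>) powr (1 / (p - 1))"
  define Y where "Y = ((c + 1) / \<sigma>) powr (1 / (p - 1))"
  define X where "X = max u Y"
  have x0: "x0 > 0" "x0 powr (p - 1) = c / \<sigma>" using root_props[OF p c s] unfolding x0_def by auto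
  have Yq: "Y powr (p - 1) = (c + 1) / \<sigma>" unfolding Y_def using p c s by (simp add: powr_powr)
  have x0Y: "x0 \<le> Y" unfolding x0_def Y_def using p c s
    by (intro powr_mono2) (auto simp: divide_right_mono)
  have XY: "Y \<le> X" "u \<le> X" unfolding X_def by auto
  have Xpos: "X > 0" using XY u by simp
  have "Y powr (p - 1) \<le> X powr (p - 1)" using XY x0Y x0 p by (intro powr_mono2) auto
  then have "c + 1 \<le> \<sigma> * X powr (p - 1)" using Yq s by (simp add: field_simps)
  then have "X * (c + 1) \<le> X * (\<sigma> * X powr (p - 1))" using Xpos by (intro mult_left_mono) auto
  then have gX: "u \<le> \<sigma> * X powr p - c * X" using pw[OF Xpos, of p] XY by (simp add: algebra_simps)
  have gx0: "\<sigma> * x0 powr p - c * x0 = 0" using pw[OF x0(1), of p] x0 s by (simp add: algebra_simps)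
  have cont: "continuous_on {x0..X} (\<lambda>x. \<sigma> * x powr p - c * x)"
    using x0 by (intro continuous_intros) auto
  obtain x where x: "x0 \<le> x" "x \<le> X" "\<sigma> * x powr p - c * x = u"
    using IVT'[of "\<lambda>x. \<sigma> * x powr p - c * x" x0 u X, OF _ gX _ cont] gx0 u x0Y XY by auto
  then show ?thesis using x0 by (intro exI[of _ x]) auto
qed

lemma Bf_props:
  assumes "u > 0"
  shows "Bf p c \<sigma> u > 0" "\<sigma> * (Bf p c \<sigma> u) powr p - c * Bf p c \<sigma> u = u"
proof -
  obtain x where x: "x > 0" "\<sigma> * x powr p - c * x = u" using g_exists[OF assms] by blast
  have "Bf p c \<sigma> u = x" unfolding Bf_def
    by (rule the_equality) (use x assms g_unique in auto)
  then show "Bf p c \<sigma> u > 0" "\<sigma> * (Bf p c \<sigma> u) powr p - c * Bf p c \<sigma> u = u" using x by auto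
qed

lemma Bf_eq:
  assumes "x > 0" "\<sigma> * x powr p - c * x = u" "u > 0"
  shows "Bf p c \<sigma> u = x"
  using Bf_props[OF assms(3)] g_unique[of "Bf p c \<sigma> u" x u] assms by auto

lemma Bf_mono:
  assumes "0 < u" "u < v"
  shows "Bf p c \<sigma> u < Bf p c \<sigma> v"
proof (rule ccontr)
  assume "\<not> ?thesis"
  then consider "Bf p c \<sigma> v = Bf p c \<sigma> u" | "Bf p c \<sigma> v < Bf p c \<sigma> u" by linarith
  then show False
  proof cases
    case 1 then show False using Bf_props[of u] Bf_props[of v] assms by auto
  next
    case 2
    have v0: "v > 0" using assms by simp
    have cv: "c \<le> \<sigma> * (Bf p c \<sigma> v) powr (p - 1)"
      using g_pos_imp[of "Bf p c \<sigma> v" \<sigma> p c] Bf_props[OF v0] v0 by simp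
    show False using g_mono[OF p s _ 2 cv] Bf_props[OF v0] Bf_props[of u] assms by simp
  qed
qed

lemma Bf_cont:
  assumes u: "u > 0"
  shows "isCont (Bf p c \<sigma>) u"
proof -
  define x0 where "x0 = (c / \<sigma>) powr (1 / (p - 1))"
  have rp: "x0 > 0" "\<And>z. 0 < z \<Longrightarrow> (\<sigma> * z powr p - c * z > 0 \<longleftrightarrow> x0 < z)"
    using root_props[OF p c s] unfolding x0_def by auto
  define x where "x = Bf p c \<sigma> u"
  have x: "x > 0" "\<sigma> * x powr p - c * x = u" using Bf_props[OF u] unfolding x_def by auto
  have xx0: "x0 < x" using rp(2)[OF x(1)] x u by simp
  have a1: "(x0 + x) / 2 < x" using xx0 by auto
  have a2: "x < x + 1" by simp
  have a3: "Bf p c \<sigma> (\<sigma> * z powr p - c * z) = z" if z: "(x0 + x) / 2 \<le> z" "z \<le> x + 1" for z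
  proof -
    have z0: "z > 0" "x0 < z" using z rp(1) xx0 by auto
    have gz: "\<sigma> * z powr p - c * z > 0" using rp(2)[OF z0(1)] z0 by simp
    show ?thesis by (rule Bf_eq) (use z0 gz in auto)
  qed
  have a4: "isCont (\<lambda>z. \<sigma> * z powr p - c * z) z" if z: "(x0 + x) / 2 \<le> z" "z \<le> x + 1" for z
  proof -
    have z0: "z > 0" using z rp(1) xx0 by auto
    show ?thesis using z0 by (intro continuous_intros) auto
  qed
  have "isCont (Bf p c \<sigma>) ((\<lambda>z. \<sigma> * z powr p - c * z) x)"
    by (rule isCont_inverse_function2[where f="\<lambda>z. \<sigma> * z powr p - c * z", OF a1 a2 a3 a4])
  then show ?thesis using x by simp
qed

lemma a_mono:
  assumes "0 < x" "x < y"
  shows "c * x + \<sigma> * x powr p < c * y + \<sigma> * y powr p"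
proof -
  have "x powr p < y powr p" using assms p by (intro powr_less_mono2) auto
  then show ?thesis using assms c s by (simp add: add_strict_mono)
qed

lemma a_exists:
  assumes u: "u > 0"
  shows "\<exists>x>0. c * x + \<sigma> * x powr p = u"
proof -
  define xl where "xl = min 1 (u / (c + \<sigma>))"
  define X where "X = max 1 (u / c)"
  have xl: "0 < xl" "xl \<le> 1" "xl \<le> u / (c + \<sigma>)" unfolding xl_def using u c s by auto
  have "xl powr p \<le> xl powr 1" using xl p by (intro powr_mono') auto
  then have "xl powr p \<le> xl" using xl by simp
  then have "c * xl + \<sigma> * xl powr p \<le> (c + \<sigma>) * xl" using s by (simp add: algebra_simps)
  also have "\<dots> \<le> u" using xl c s by (simp add: field_simps)
  finally have axl: "c * xl + \<sigma> * xl powr p \<le> u" .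
  have X: "1 \<le> X" "u / c \<le> X" unfolding X_def by auto
  have "u \<le> c * X" using X c by (simp add: field_simps)
  also have "\<dots> \<le> c * X + \<sigma> * X powr p" using s by simp
  finally have aX: "u \<le> c * X + \<sigma> * X powr p" .
  have "xl \<le> X" using xl X by simp
  have cont: "continuous_on {xl..X} (\<lambda>x. c * x + \<sigma> * x powr p)"
    using xl by (intro continuous_intros) auto
  obtain x where x: "xl \<le> x" "x \<le> X" "c * x + \<sigma> * x powr p = u"
    using IVT'[of "\<lambda>x. c * x + \<sigma> * x powr p" xl u X, OF axl aX \<open>xl \<le> X\<close> cont] by auto
  then show ?thesis using xl by (intro exI[of _ x]) auto
qed

lemma a_unique:
  assumes "0 < x" "0 < y" "c * x + \<sigma> * x powr p = c * y + \<sigma> * y powr p"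
  shows "x = y"
  using a_mono[of x y] a_mono[of y x] assms by (cases x y rule: linorder_cases) auto

lemma Af_props:
  assumes "u > 0"
  shows "Af p c \<sigma> u > 0" "c * Af p c \<sigma> u + \<sigma> * (Af p c \<sigma> u) powr p = u"
proof -
  obtain x where x: "x > 0" "c * x + \<sigma> * x powr p = u" using a_exists[OF assms] by blast
  have "Af p c \<sigma> u = x" unfolding Af_def
    by (rule the_equality) (use x a_unique in auto)
  then show "Af p c \<sigma> u > 0" "c * Af p c \<sigma> u + \<sigma> * (Af p c \<sigma> u) powr p = u" using x by auto
qed

lemma Af_eq:
  assumes "x > 0"
  shows "Af p c \<sigma> (c * x + \<sigma> * x powr p) = x"
proof -
  have u: "c * x + \<sigma> * x powr p > 0" using assms c s by (simp add: add_pos_nonneg)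
  show ?thesis using Af_props[OF u] a_unique[of "Af p c \<sigma> (c * x + \<sigma> * x powr p)" x] assms by auto
qed

lemma Af_mono:
  assumes "0 < u" "u < v"
  shows "Af p c \<sigma> u < Af p c \<sigma> v"
proof (rule ccontr)
  assume "\<not> ?thesis"
  then have "Af p c \<sigma> v \<le> Af p c \<sigma> u" by simp
  then consider "Af p c \<sigma> v = Af p c \<sigma> u" | "Af p c \<sigma> v < Af p c \<sigma> u" by linarith
  then show False
  proof cases
    case 1 then show False using Af_props[of u] Af_props[of v] assms by auto
  next
    case 2 then show False using a_mono[OF _ 2] Af_props[of u] Af_props[of v] assms by auto
  qed
qed

lemma Af_borel: "(\<lambda>u. if u > 0 then Af p c \<sigma> u else 0) \<in> borel_measurable borel"
proof (rule borel_measurable_mono)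
  show "mono (\<lambda>u. if u > 0 then Af p c \<sigma> u else 0)"
  proof (rule monoI)
    fix u v :: real assume "u \<le> v"
    then show "(if u > 0 then Af p c \<sigma> u else 0) \<le> (if v > 0 then Af p c \<sigma> v else 0)"
      using Af_mono[of u v] Af_props[of v] by (cases "u = v") (auto simp: less_imp_le)
  qed
qed

end



lemma pair_lemma:
  fixes p c \<sigma> :: real and G :: "real \<Rightarrow> real" and B :: "real set"
  assumes p: "p > 1" and c: "c > 0" and s: "\<sigma> > 0" and G: "integrable lborel G"
    and Z: "\<And>A. A \<in> sets borel \<Longrightarrow> lam G {x. c * x + \<sigma> * \<bar>x\<bar> powr p \<in> A} = 0"
    and B: "B \<in> sets borel" "B \<subseteq> {0<..}"
  shows "(\<lambda>x. - Bf p c \<sigma> (c * x + \<sigma> * x powr p)) ` B \<in> sets borel"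
    "(\<lambda>x. - Bf p c \<sigma> (c * x + \<sigma> * x powr p)) ` B \<subseteq> {..<0}"
    "lam G ((\<lambda>x. - Bf p c \<sigma> (c * x + \<sigma> * x powr p)) ` B) = - lam G B"
proof -
  define \<psi> where "\<psi> = (\<lambda>x. - Bf p c \<sigma> (c * x + \<sigma> * x powr p))"
  define h where "h = (\<lambda>x. c * x + \<sigma> * \<bar>x\<bar> powr p)"
  define k where "k = (\<lambda>u. if u > 0 then Af p c \<sigma> u else 0)"
  have hm[measurable]: "h \<in> borel_measurable borel" unfolding h_def by measurable
  have km[measurable]: "k \<in> borel_measurable borel" unfolding k_def by (rule Af_borel[OF p c s])
  have [measurable]: "B \<in> sets borel" by (rule B(1))
  define A where "A = {u. u > 0 \<and> k u \<in> B}"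
  have Ab: "A \<in> sets borel" unfolding A_def by measurable
  have apos: "c * x + \<sigma> * x powr p > 0" if "x > 0" for x using that c s by (simp add: add_pos_nonneg)
  have \<psi>neg: "\<psi> b < 0" if "b > 0" for b
    using Bf_props(1)[OF p c s apos[OF that]] unfolding \<psi>_def by simp
  have pre: "h -` A = B \<union> \<psi> ` B"
  proof (intro set_eqI iffI)
    fix x assume "x \<in> h -` A"
    then have hx: "h x > 0" "Af p c \<sigma> (h x) \<in> B" unfolding A_def k_def by auto
    consider "x > 0" | "x = 0" | "x < 0" by linarith
    then show "x \<in> B \<union> \<psi> ` B"
    proof cases
      case 1
      then have "Af p c \<sigma> (h x) = x" unfolding h_def using Af_eq[OF p c s 1] by simp
      then show ?thesis using hx by simp
    next
      case 2 then show ?thesis using hx p by (simp add: h_def)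
    next
      case 3
      define b where "b = Af p c \<sigma> (h x)"
      have b: "b > 0" "c * b + \<sigma> * b powr p = h x" using Af_props[OF p c s hx(1)] unfolding b_def by auto
      have gx: "\<sigma> * (-x) powr p - c * (-x) = h x" using 3 unfolding h_def by simp
      have "Bf p c \<sigma> (c * b + \<sigma> * b powr p) = - x"
        using b gx 3 hx(1) by (intro Bf_eq[OF p c s]) auto
      then have "\<psi> b = x" unfolding \<psi>_def by simp
      then show ?thesis using hx(2) unfolding b_def[symmetric] by auto
    qed
  next
    fix x assume "x \<in> B \<union> \<psi> ` B"
    then consider "x \<in> B" | b where "b \<in> B" "x = \<psi> b" by auto
    then show "x \<in> h -` A"
    proof cases
      case 1
      then have x0: "x > 0" using B by auto
      have "h x = c * x + \<sigma> * x powr p" unfolding h_def using x0 by simp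
      then show ?thesis using 1 x0 apos[OF x0] Af_eq[OF p c s x0] unfolding A_def k_def by simp
    next
      case 2
      then have b0: "b > 0" using B by auto
      define y where "y = Bf p c \<sigma> (c * b + \<sigma> * b powr p)"
      have y: "y > 0" "\<sigma> * y powr p - c * y = c * b + \<sigma> * b powr p"
        using Bf_props[OF p c s apos[OF b0]] unfolding y_def by auto
      have xy: "x = - y" using 2 unfolding \<psi>_def y_def by simp
      have hx: "h x = c * b + \<sigma> * b powr p" unfolding h_def xy using y by simp
      then show ?thesis using 2 b0 apos[OF b0] Af_eq[OF p c s b0] unfolding A_def k_def by simp
    qed
  qed
  have \<psi>B: "\<psi> ` B = h -` A \<inter> {..<0}"
    using pre \<psi>neg B(2) by (auto simp: subset_iff)
  have \<psi>Bb: "\<psi> ` B \<in> sets borel" unfolding \<psi>B using Ab by measurable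
  have \<psi>Bn: "\<psi> ` B \<subseteq> {..<0}" using \<psi>B by auto
  have "0 = lam G (h -` A)" using Z[OF Ab] unfolding h_def by (simp add: vimage_def)
  also have "\<dots> = lam G B + lam G (\<psi> ` B)" unfolding pre
    by (rule lam_union[OF G B(1) \<psi>Bb]) (use B(2) \<psi>Bn in fastforce)
  finally have "lam G (\<psi> ` B) = - lam G B" by simp
  then show "\<psi> ` B \<in> sets borel" "\<psi> ` B \<subseteq> {..<0}" "lam G (\<psi> ` B) = - lam G B"
    using \<psi>Bb \<psi>Bn by auto
qed



lemma gt_lemma:
  fixes p c \<sigma> x y :: real
  assumes p: "p > 1" and c: "c > 0" and s: "\<sigma> > 0" and x: "x > 0" and y: "y > 0"
    and e: "\<sigma> * y powr p - c * y = c * x + \<sigma> * x powr p"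
  shows "x < y"
proof (rule ccontr)
  assume "\<not> x < y"
  then have "y powr p \<le> x powr p" using y p by (intro powr_mono2) auto
  then have "\<sigma> * y powr p \<le> \<sigma> * x powr p" using s by simp
  then show False using e c x y by (smt (verit) mult_pos_pos)
qed

theorem pos_side:
  fixes p c1 \<sigma>1 c2 \<sigma>2 :: real and G :: "real \<Rightarrow> real"
  assumes p: "p > 1" and c1: "c1 > 0" and s1: "\<sigma>1 > 0" and c2: "c2 > 0" and s2: "\<sigma>2 > 0"
    and G: "integrable lborel G"
    and Z1: "\<And>A. A \<in> sets borel \<Longrightarrow> lam G {x. c1 * x + \<sigma>1 * \<bar>x\<bar> powr p \<in> A} = 0"
    and Z2: "\<And>A. A \<in> sets borel \<Longrightarrow> lam G {x. c2 * x - \<sigma>2 * \<bar>x\<bar> powr p \<in> A} = 0"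
  shows "AE s in lborel. 0 < s \<longrightarrow> G s = 0"
proof -
  define G' where "G' = (\<lambda>s. G (- s))"
  have G': "integrable lborel G'" unfolding G'_def by (rule integrable_reflect[OF G])
  have Z2': "lam G' {x. c2 * x + \<sigma>2 * \<bar>x\<bar> powr p \<in> A} = 0" if A: "A \<in> sets borel" for A
  proof -
    have "uminus ` {x. c2 * x + \<sigma>2 * \<bar>x\<bar> powr p \<in> A} = {y. c2 * y - \<sigma>2 * \<bar>y\<bar> powr p \<in> uminus ` A}"
    proof (intro set_eqI iffI)
      fix y assume "y \<in> uminus ` {x. c2 * x + \<sigma>2 * \<bar>x\<bar> powr p \<in> A}"
      then obtain x where "y = - x" "c2 * x + \<sigma>2 * \<bar>x\<bar> powr p \<in> A" by auto
      then show "y \<in> {y. c2 * y - \<sigma>2 * \<bar>y\<bar> powr p \<in> uminus ` A}"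
        by (auto simp: image_iff intro!: bexI[of _ "c2 * x + \<sigma>2 * \<bar>x\<bar> powr p"])
    next
      fix y assume "y \<in> {y. c2 * y - \<sigma>2 * \<bar>y\<bar> powr p \<in> uminus ` A}"
      then obtain a where a: "a \<in> A" "c2 * y - \<sigma>2 * \<bar>y\<bar> powr p = - a" by auto
      then have "c2 * (- y) + \<sigma>2 * \<bar>- y\<bar> powr p = a" by simp
      then show "y \<in> uminus ` {x. c2 * x + \<sigma>2 * \<bar>x\<bar> powr p \<in> A}"
        using a(1) by (intro image_eqI[of _ _ "- y"]) auto
    qed
    then show ?thesis unfolding G'_def lam_reflect using Z2[OF reflect_borel[OF A]] by simp
  qed
  define a1 where "a1 = (\<lambda>x. c1 * x + \<sigma>1 * x powr p)"
  define a2 where "a2 = (\<lambda>x. c2 * x + \<sigma>2 * x powr p)"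
  define \<psi>1 where "\<psi>1 = (\<lambda>x. - Bf p c1 \<sigma>1 (a1 x))"
  define \<psi>2 where "\<psi>2 = (\<lambda>x. - Bf p c2 \<sigma>2 (a2 x))"
  define \<Phi> where "\<Phi> = (\<lambda>x. Bf p c2 \<sigma>2 (a2 (Bf p c1 \<sigma>1 (a1 x))))"
  have a1pos: "a1 x > 0" if "x > 0" for x using that c1 s1 unfolding a1_def by (simp add: add_pos_nonneg)
  have a2pos: "a2 x > 0" if "x > 0" for x using that c2 s2 unfolding a2_def by (simp add: add_pos_nonneg)
  have y1: "Bf p c1 \<sigma>1 (a1 x) > 0" "\<sigma>1 * (Bf p c1 \<sigma>1 (a1 x)) powr p - c1 * Bf p c1 \<sigma>1 (a1 x) = a1 x"
    if "x > 0" for x using Bf_props[OF p c1 s1 a1pos[OF that]] by auto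
  have y2: "Bf p c2 \<sigma>2 (a2 x) > 0" "\<sigma>2 * (Bf p c2 \<sigma>2 (a2 x)) powr p - c2 * Bf p c2 \<sigma>2 (a2 x) = a2 x"
    if "x > 0" for x using Bf_props[OF p c2 s2 a2pos[OF that]] by auto
  have pos: "s < \<Phi> s" if "0 < s" for s
  proof -
    have "s < Bf p c1 \<sigma>1 (a1 s)"
      by (rule gt_lemma[OF p c1 s1 that y1(1)[OF that]]) (use y1(2)[OF that] in \<open>simp add: a1_def\<close>)
    also have "\<dots> < \<Phi> s" unfolding \<Phi>_def
      by (rule gt_lemma[OF p c2 s2 y1(1)[OF that] y2(1)[OF y1(1)[OF that]]])
         (use y2(2)[OF y1(1)[OF that]] in \<open>simp add: a2_def\<close>)
    finally show ?thesis .
  qed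
  have mono: "\<Phi> s < \<Phi> t" if "0 < s" "s < t" for s t
  proof -
    have t0: "t > 0" using that by simp
    have "a1 s < a1 t" unfolding a1_def using a_mono[OF p c1 s1 that] .
    then have "Bf p c1 \<sigma>1 (a1 s) < Bf p c1 \<sigma>1 (a1 t)" using Bf_mono[OF p c1 s1 a1pos[OF that(1)]] by simp
    then have "a2 (Bf p c1 \<sigma>1 (a1 s)) < a2 (Bf p c1 \<sigma>1 (a1 t))"
      unfolding a2_def using a_mono[OF p c2 s2 y1(1)[OF that(1)]] by simp
    then show ?thesis unfolding \<Phi>_def using Bf_mono[OF p c2 s2 a2pos[OF y1(1)[OF that(1)]]] by simp
  qed
  have inv: "\<Phi> ` B \<in> sets borel \<and> lam G (\<Phi> ` B) = lam G B" if B: "B \<in> sets borel" "B \<subseteq> {0<..}" for B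
  proof -
    have P1: "\<psi>1 ` B \<in> sets borel" "\<psi>1 ` B \<subseteq> {..<0}" "lam G (\<psi>1 ` B) = - lam G B"
      using pair_lemma[OF p c1 s1 G Z1 B] unfolding \<psi>1_def a1_def by auto
    define B' where "B' = uminus ` (\<psi>1 ` B)"
    have B': "B' \<in> sets borel" "B' \<subseteq> {0<..}" unfolding B'_def using reflect_borel[OF P1(1)] P1(2) by auto
    have lB': "lam G' B' = lam G (\<psi>1 ` B)" unfolding G'_def lam_reflect B'_def by (simp add: image_image)
    have P2: "\<psi>2 ` B' \<in> sets borel" "lam G' (\<psi>2 ` B') = - lam G' B'"
      using pair_lemma[OF p c2 s2 G' Z2' B'] unfolding \<psi>2_def a2_def by auto
    have eq: "\<Phi> ` B = uminus ` (\<psi>2 ` B')"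
      unfolding B'_def \<Phi>_def \<psi>1_def \<psi>2_def by (simp add: image_image)
    have "lam G (\<Phi> ` B) = lam G' (\<psi>2 ` B')" unfolding eq G'_def lam_reflect ..
    then show ?thesis using P2 lB' P1 eq reflect_borel[OF P2(1)] by simp
  qed
  have cont: "isCont \<Phi> s" if "0 < s" for s
  proof -
    have h1: "isCont a1 s" unfolding a1_def using that by (intro continuous_intros) auto
    have h2: "isCont (Bf p c1 \<sigma>1) (a1 s)" by (rule Bf_cont[OF p c1 s1 a1pos[OF that]])
    have h3: "isCont a2 (Bf p c1 \<sigma>1 (a1 s))" unfolding a2_def using y1(1)[OF that]
      by (intro continuous_intros) auto
    have h4: "isCont (Bf p c2 \<sigma>2) (a2 (Bf p c1 \<sigma>1 (a1 s)))"
      by (rule Bf_cont[OF p c2 s2 a2pos[OF y1(1)[OF that]]])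
    have "isCont (\<lambda>x. Bf p c1 \<sigma>1 (a1 x)) s" by (rule isCont_o2[OF h1 h2])
    then have "isCont (\<lambda>x. a2 (Bf p c1 \<sigma>1 (a1 x))) s" by (rule isCont_o2) (rule h3)
    then have "isCont (\<lambda>x. Bf p c2 \<sigma>2 (a2 (Bf p c1 \<sigma>1 (a1 x)))) s" by (rule isCont_o2) (rule h4)
    then show ?thesis unfolding \<Phi>_def .
  qed
  have cov: "\<exists>a. 0 < a \<and> a < s \<and> s < \<Phi> a" if s0: "0 < s" for s
  proof -
    have "(\<Phi> \<longlongrightarrow> \<Phi> s) (at s)" using cont[OF s0] by (simp add: isCont_def)
    then have "eventually (\<lambda>x. s < \<Phi> x) (at s)" using pos[OF s0] by (rule order_tendstoD(1))
    then obtain d where d: "d > 0" "\<And>x. x \<noteq> s \<Longrightarrow> dist x s < d \<Longrightarrow> s < \<Phi> x"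
      unfolding eventually_at by auto
    define a where "a = max (s / 2) (s - d / 2)"
    have "0 < a" "a < s" "dist a s < d" unfolding a_def using s0 d(1) by (auto simp: dist_real_def)
    then show ?thesis using d(2)[of a] by (intro exI[of _ a]) auto
  qed
  show ?thesis
    by (rule orbit[OF G pos mono inv zero_on[OF G] cov]) auto
qed



lemma reflect_hyp:
  fixes G f :: "real \<Rightarrow> real"
  assumes Z: "\<And>A. A \<in> sets borel \<Longrightarrow> lam G {x. f x \<in> A} = 0" and A: "A \<in> sets borel"
  shows "lam (\<lambda>s. G (- s)) {x. - f (- x) \<in> A} = 0"
proof -
  have "uminus ` {x. - f (- x) \<in> A} = {y. f y \<in> uminus ` A}"
  proof (intro set_eqI iffI)
    fix y assume "y \<in> uminus ` {x. - f (- x) \<in> A}"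
    then obtain x where x: "y = - x" "- f (- x) \<in> A" by auto
    then have "f y = - (- f (- x))" by simp
    then have "f y \<in> uminus ` A" using x(2) by (intro image_eqI[of _ _ "- f (- x)"]) auto
    then show "y \<in> {y. f y \<in> uminus ` A}" by simp
  next
    fix y assume "y \<in> {y. f y \<in> uminus ` A}"
    then obtain a where a: "a \<in> A" "f y = - a" by auto
    then have "- f (- (- y)) \<in> A" by simp
    then show "y \<in> uminus ` {x. - f (- x) \<in> A}" by (intro image_eqI[of _ _ "- y"]) auto
  qed
  then show ?thesis unfolding lam_reflect using Z[OF reflect_borel[OF A]] by simp
qed

lemma main_real_gt1:
  fixes p \<theta>1 \<theta>2 :: real and G :: "real \<Rightarrow> real"
  assumes p: "p > 1" and t1: "0 < \<theta>1" "\<theta>1 < pi / 4" and t2: "- pi / 4 < \<theta>2" "\<theta>2 < 0"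
    and G: "integrable lborel G"
    and Z1: "\<And>A. A \<in> sets borel \<Longrightarrow> lam G {x. cos \<theta>1 * x + sin \<theta>1 * \<bar>x\<bar> powr p \<in> A} = 0"
    and Z2: "\<And>A. A \<in> sets borel \<Longrightarrow> lam G {x. cos \<theta>2 * x + sin \<theta>2 * \<bar>x\<bar> powr p \<in> A} = 0"
  shows "AE s in lborel. G s = 0"
proof -
  have c1: "cos \<theta>1 > 0" using t1 by (intro cos_gt_zero) auto
  have s1: "sin \<theta>1 > 0" using t1 by (intro sin_gt_zero) auto
  have c2: "cos \<theta>2 > 0" using t2 by (intro cos_gt_zero_pi) auto
  have s2: "- sin \<theta>2 > 0" using t2 sin_less_zero[of \<theta>2] by auto
  have Z2': "lam G {x. cos \<theta>2 * x - (- sin \<theta>2) * \<bar>x\<bar> powr p \<in> A} = 0" if "A \<in> sets borel" for A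
    using Z2[OF that] by simp
  have P: "AE s in lborel. 0 < s \<longrightarrow> G s = 0"
    by (rule pos_side[OF p c1 s1 c2 s2 G Z1 Z2'])
  define G' where "G' = (\<lambda>s. G (- s))"
  have G': "integrable lborel G'" unfolding G'_def by (rule integrable_reflect[OF G])
  have W1: "lam G' {x. cos \<theta>2 * x + (- sin \<theta>2) * \<bar>x\<bar> powr p \<in> A} = 0" if A: "A \<in> sets borel" for A
    using reflect_hyp[of G "\<lambda>x. cos \<theta>2 * x + sin \<theta>2 * \<bar>x\<bar> powr p", OF Z2 A] unfolding G'_def by simp
  have W2: "lam G' {x. cos \<theta>1 * x - sin \<theta>1 * \<bar>x\<bar> powr p \<in> A} = 0" if A: "A \<in> sets borel" for A
    using reflect_hyp[of G "\<lambda>x. cos \<theta>1 * x + sin \<theta>1 * \<bar>x\<bar> powr p", OF Z1 A] unfolding G'_def by simp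
  have N': "AE s in lborel. 0 < s \<longrightarrow> G (- s) = 0"
    using pos_side[OF p c2 s2 c1 s1 G' W1 W2] unfolding G'_def .
  have Gm[measurable]: "G \<in> borel_measurable borel" using borel_measurable_integrable[OF G] by simp
  have meas: "{x \<in> space borel. x < 0 \<longrightarrow> G x = 0} \<in> sets borel" by measurable
  have um: "(uminus::real\<Rightarrow>real) \<in> measurable lborel borel" by simp
  have "AE s in lborel. - s < 0 \<longrightarrow> G (- s) = 0" using N' by (rule AE_mp) auto
  then have "AE s in distr lborel borel uminus. s < 0 \<longrightarrow> G s = 0"
    using AE_distr_iff[OF um meas] by simp
  then have N: "AE s in lborel. s < 0 \<longrightarrow> G s = 0" by (metis lborel_distr_uminus)
  show ?thesis using P N AE_lborel_singleton[of 0]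
    by eventually_elim (metis linorder_neqE_linordered_idom)
qed

lemma main_real_eq1:
  fixes \<theta>1 :: real and G :: "real \<Rightarrow> real"
  assumes t1: "0 < \<theta>1" "\<theta>1 < pi / 4"
    and G: "integrable lborel G"
    and Z1: "\<And>A. A \<in> sets borel \<Longrightarrow> lam G {x. cos \<theta>1 * x + sin \<theta>1 * \<bar>x\<bar> powr 1 \<in> A} = 0"
  shows "AE s in lborel. G s = 0"
proof -
  have s1: "sin \<theta>1 > 0" using t1 by (intro sin_gt_zero) auto
  have "sin \<theta>1 < sin (pi/4)" using t1 by (subst sin_mono_less_eq) auto
  also have "\<dots> = cos (pi/4)" by (simp add: sin_45 cos_45)
  also have "\<dots> < cos \<theta>1" using t1 by (subst cos_mono_less_eq) auto
  finally have sc: "sin \<theta>1 < cos \<theta>1" .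
  define k where "k = (\<lambda>u::real. if u \<ge> 0 then u / (cos \<theta>1 + sin \<theta>1) else u / (cos \<theta>1 - sin \<theta>1))"
  have km[measurable]: "k \<in> borel_measurable borel" unfolding k_def by measurable
  have kh: "k (cos \<theta>1 * x + sin \<theta>1 * \<bar>x\<bar> powr 1) = x" for x
  proof (cases "x \<ge> 0")
    case True
    then have "cos \<theta>1 * x + sin \<theta>1 * \<bar>x\<bar> powr 1 = (cos \<theta>1 + sin \<theta>1) * x" by (simp add: algebra_simps)
    moreover have "(cos \<theta>1 + sin \<theta>1) * x \<ge> 0" using True s1 sc by simp
    ultimately show ?thesis unfolding k_def using s1 sc by simp
  next
    case False
    then have "cos \<theta>1 * x + sin \<theta>1 * \<bar>x\<bar> powr 1 = (cos \<theta>1 - sin \<theta>1) * x" by (simp add: algebra_simps)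
    moreover have "(cos \<theta>1 - sin \<theta>1) * x < 0" using False sc by (simp add: mult_pos_neg)
    ultimately show ?thesis unfolding k_def using s1 sc by simp
  qed
  have "AE s in lborel. s \<in> UNIV \<longrightarrow> G s = 0"
  proof (rule zero_on[OF G])
    fix B :: "real set" assume B: "B \<in> sets borel"
    have kB: "k -` B \<in> sets borel" using measurable_sets_borel[OF km B] .
    have kh': "k (cos \<theta>1 * x + sin \<theta>1 * \<bar>x\<bar>) = x" for x using kh[of x] by simp
    from Z1[OF kB] show "lam G B = 0" by (simp add: kh')
  qed simp
  then show ?thesis by simp
qed

lemma line_hyp:
  fixes F :: "real \<Rightarrow> complex" and p \<theta> :: real
  assumes F: "integrable lborel F"
    and Z: "\<And>x y. (x, y) \<in> line \<theta> \<Longrightarrow> (CLINT s|lborel. F s * cis (-(x * s + y * \<bar>s\<bar> powr p))) = 0"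
    and A: "A \<in> sets borel"
  shows "lam (\<lambda>s. Re (F s)) {x. cos \<theta> * x + sin \<theta> * \<bar>x\<bar> powr p \<in> A} = 0"
    "lam (\<lambda>s. Im (F s)) {x. cos \<theta> * x + sin \<theta> * \<bar>x\<bar> powr p \<in> A} = 0"
proof -
  define h where "h = (\<lambda>x. cos \<theta> * x + sin \<theta> * \<bar>x\<bar> powr p)"
  have hm[measurable]: "h \<in> borel_measurable borel" unfolding h_def by measurable
  have Zt: "(CLINT s|lborel. F s * cis (t * h s)) = 0" for t
  proof -
    have "((-t) * cos \<theta>, (-t) * sin \<theta>) \<in> line \<theta>" unfolding line_def by blast
    from Z[OF this] show ?thesis unfolding h_def by (simp add: algebra_simps)
  qed
  have ind: "indicator {x. h x \<in> A} s = indicator A (h s)" for s by (simp add: indicator_def)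
  show "lam (\<lambda>s. Re (F s)) {x. cos \<theta> * x + sin \<theta> * \<bar>x\<bar> powr p \<in> A} = 0"
  proof -
    have "lam (\<lambda>s. Re (F s)) {x. cos \<theta> * x + sin \<theta> * \<bar>x\<bar> powr p \<in> A} = (LINT s|lborel. indicator A (h s) * Re (F s))"
      unfolding lam_def h_def by (intro Bochner_Integration.integral_cong) (auto simp: indicator_def)
    then show ?thesis using fourier_complex(1)[OF F hm Zt A] by simp
  qed
  show "lam (\<lambda>s. Im (F s)) {x. cos \<theta> * x + sin \<theta> * \<bar>x\<bar> powr p \<in> A} = 0"
  proof -
    have "lam (\<lambda>s. Im (F s)) {x. cos \<theta> * x + sin \<theta> * \<bar>x\<bar> powr p \<in> A} = (LINT s|lborel. indicator A (h s) * Im (F s))"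
      unfolding lam_def h_def by (intro Bochner_Integration.integral_cong) (auto simp: indicator_def)
    then show ?thesis using fourier_complex(2)[OF F hm Zt A] by simp
  qed
qed

theorem theorem3p4:
  fixes p :: real
  assumes "p \<ge> 1"
  shows "\<exists>E. E \<subseteq> {-pi/2..<pi/2} \<times> {-pi/2..<pi/2} \<and> E \<in> sets lebesgue \<and>
             emeasure lebesgue E > 0 \<and>
             (\<forall>(\<theta>1, \<theta>2)\<in>E. HUP p (line \<theta>1 \<union> line \<theta>2))"
proof (intro exI conjI)
  define E where "E = ({0<..<pi/4} \<times> {-pi/4<..<0} :: (real \<times> real) set)"
  show "E \<subseteq> {-pi/2..<pi/2} \<times> {-pi/2..<pi/2}" "E \<in> sets lebesgue" "emeasure lebesgue E > 0"
    using E_props unfolding E_def by auto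
  show "\<forall>(\<theta>1, \<theta>2)\<in>E. HUP p (line \<theta>1 \<union> line \<theta>2)"
  proof (clarify)
    fix \<theta>1 \<theta>2 assume "(\<theta>1, \<theta>2) \<in> E"
    then have t1: "0 < \<theta>1" "\<theta>1 < pi / 4" and t2: "- pi / 4 < \<theta>2" "\<theta>2 < 0" unfolding E_def by auto
    show "HUP p (line \<theta>1 \<union> line \<theta>2)"
    proof (rule HUP_reduce)
      fix F :: "real \<Rightarrow> complex"
      assume F: "integrable lborel F"
        and Z: "\<And>x y. (x, y) \<in> line \<theta>1 \<union> line \<theta>2 \<Longrightarrow> (CLINT s|lborel. F s * cis (-(x * s + y * \<bar>s\<bar> powr p))) = 0"
      have L1: "lam (\<lambda>s. Re (F s)) {x. cos \<theta>1 * x + sin \<theta>1 * \<bar>x\<bar> powr p \<in> A} = 0"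
          "lam (\<lambda>s. Im (F s)) {x. cos \<theta>1 * x + sin \<theta>1 * \<bar>x\<bar> powr p \<in> A} = 0"
        if "A \<in> sets borel" for A using line_hyp[OF F _ that, of \<theta>1 p] Z by auto
      have L2: "lam (\<lambda>s. Re (F s)) {x. cos \<theta>2 * x + sin \<theta>2 * \<bar>x\<bar> powr p \<in> A} = 0"
          "lam (\<lambda>s. Im (F s)) {x. cos \<theta>2 * x + sin \<theta>2 * \<bar>x\<bar> powr p \<in> A} = 0"
        if "A \<in> sets borel" for A using line_hyp[OF F _ that, of \<theta>2 p] Z by auto
      have FR: "integrable lborel (\<lambda>s. Re (F s))" "integrable lborel (\<lambda>s. Im (F s))"
        using F by auto
      have "(AE s in lborel. Re (F s) = 0) \<and> (AE s in lborel. Im (F s) = 0)"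
      proof (cases "p = 1")
        case True
        show ?thesis using main_real_eq1[OF t1 FR(1)] main_real_eq1[OF t1 FR(2)] L1 True by auto
      next
        case False
        then have p1: "p > 1" using assms by simp
        show ?thesis using main_real_gt1[OF p1 t1 t2 FR(1)] main_real_gt1[OF p1 t1 t2 FR(2)] L1 L2 by auto
      qed
      then show "AE s in lborel. F s = 0"
        by (auto elim!: AE_mp[OF AE_conjI] intro!: AE_I2 simp: complex_eq_iff)
    qed
  qed
qed


end
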